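(* Let $\Theta$ be a parameter space, let $L(\boldsymbol{\theta}\mid D)$ and $L(\boldsymbol{\theta}\mid D_0)$ be the (positive) likelihood functions of the current data $D$ and the historical data $D_0$, let $\pi_0$ be an initial prior density on $\Theta$, let $\xi\in[0,1]$ and let $\alpha\in\mathbb{R}\setminus\{-1,1\}$. Put $$p_0(\boldsymbol{\theta})=L(\boldsymbol{\theta}\mid D)\pi_0(\boldsymbol{\theta}),\qquad p_1(\boldsymbol{\theta})=L(\boldsymbol{\theta}\mid D)L(\boldsymbol{\theta}\mid D_0)\pi_0(\boldsymbol{\theta}),$$ and assume $0<\int_\Theta\{(1-\xi)p_0(\boldsymbol{\theta})^{\frac{1+\alpha}{2}}+\xi p_1(\boldsymbol{\theta})^{\frac{1+\alpha}{2}}\}^{\frac{2}{1+\alpha}}d\boldsymbol{\theta}<\infty$. Then the generalized power posterior $$g^*(\boldsymbol{\theta})=\frac{\left\{(1-\xi)p_0(\boldsymbol{\theta})^{\frac{1+\alpha}{2}}+\xi p_1(\boldsymbol{\theta})^{\frac{1+\alpha}{2}}\right\}^{\frac{2}{1+\alpha}}}{\int_\Theta\left\{(1-\xi)p_0(\boldsymbol{\theta}')^{\frac{1+\alpha}{2}}+\xi p_1(\boldsymbol{\theta}')^{\frac{1+\alpha}{2}}\right\}^{\frac{2}{1+\alpha}}d\boldsymbol{\theta}'}$$ is the minimizer of $(1-\xi)D_\alpha[g\,\|\,p_0]+\xi D_\alpha[g\,\|\,p_1]$ over all probability densities $g\ge 0$ on $\Theta$ with $\int_\Theta g(\boldsy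mbol{\theta})d\boldsymbol{\theta}=1$.
   Context: Amari's $\alpha$-divergence between nonnegative functions $p,q$ on $\Theta$ is $D_\alpha[p\,\|\,q]=\frac{4}{1-\alpha^2}\left(1-\int_\Theta p(\boldsymbol{\theta})^{\frac{1-\alpha}{2}}q(\boldsymbol{\theta})^{\frac{1+\alpha}{2}}d\boldsymbol{\theta}\right)$. Here $p_0,p_1$ are the (unnormalized) pseudo-posteriors corresponding to ignoring ($\xi=0$) and fully using ($\xi=1$) the historical data in the power prior $\pi(\boldsymbol{\theta}\mid D_0,\xi)\propto L(\boldsymbol{\theta}\mid D_0)^\xi\pi_0(\boldsymbol{\theta})$. *)

theory Defs
  imports "HOL-Analysis.Analysis"
begin

definition epow :: "ennreal \<Rightarrow> real \<Rightarrow> ennreal" where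
  "epow x e =
     (if x = 0 then (if e < 0 then top else if e = 0 then 1 else 0)
      else if x = top then (if e < 0 then 0 else if e = 0 then 1 else top)
      else ennreal (enn2real x powr e))"

definition alpha_div :: "'a measure \<Rightarrow> real \<Rightarrow> ('a \<Rightarrow> real) \<Rightarrow> ('a \<Rightarrow> real) \<Rightarrow> ereal" where
  "alpha_div M \<alpha> p q =
     ereal (4 / (1 - \<alpha>\<^sup>2)) *
     (1 - enn2ereal (\<integral>\<^sup>+ \<theta>. epow (ennreal (p \<theta>)) ((1 - \<alpha>) / 2)
                                  * epow (ennreal (q \<theta>)) ((1 + \<alpha>) / 2) \<partial>M))"

definition is_density :: "'a measure \<Rightarrow> ('a \<Rightarrow> real) \<Rightarrow> bool" where
  "is_density M g \<longleftrightarrow> g \<in> borel_measurable M \<and> (\<forall>\<theta>\<in>space M. 0 \<le> g \<theta>)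
      \<and> (\<integral>\<^sup>+ \<theta>. ennreal (g \<theta>) \<partial>M) = 1"

definition gpp_num :: "real \<Rightarrow> real \<Rightarrow> ('a \<Rightarrow> real) \<Rightarrow> ('a \<Rightarrow> real) \<Rightarrow> 'a \<Rightarrow> ennreal" where
  "gpp_num \<xi> \<alpha> p0 p1 \<theta> =
     epow (ennreal (1 - \<xi>) * epow (ennreal (p0 \<theta>)) ((1 + \<alpha>) / 2)
           + ennreal \<xi> * epow (ennreal (p1 \<theta>)) ((1 + \<alpha>) / 2)) (2 / (1 + \<alpha>))"

definition gen_power_posterior ::
    "'a measure \<Rightarrow> real \<Rightarrow> real \<Rightarrow> ('a \<Rightarrow> real) \<Rightarrow> ('a \<Rightarrow> real) \<Rightarrow> 'a \<Rightarrow> real" where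
  "gen_power_posterior M \<xi> \<alpha> p0 p1 \<theta> =
     enn2real (gpp_num \<xi> \<alpha> p0 p1 \<theta>) / enn2real (\<integral>\<^sup>+ \<theta>'. gpp_num \<xi> \<alpha> p0 p1 \<theta>' \<partial>M)"

end

theory Submission
  imports Defs
begin

lemma epow_measurable[measurable (raw)]:
  assumes "f \<in> borel_measurable M"
  shows "(\<lambda>x. epow (f x) e) \<in> borel_measurable M"
  unfolding epow_def using assms by measurable

lemma epow_inv:
  assumes "e \<noteq> 0"
  shows "epow (epow x e) (1/e) = x"
proof (cases x)
  case (real r)
  then show ?thesis using assms
    by (cases "r = 0") (auto simp: epow_def powr_powr ennreal_eq_0_iff)
next
  case top
  then show ?thesis using assms by (auto simp: epow_def)
qed

lemma epow_self:
  assumes "x \<ge> 0"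
  shows "epow (ennreal x) (1 - b) * epow (ennreal x) b = ennreal x"
proof (cases "x = 0")
  case True then show ?thesis by (auto simp: epow_def)
next
  case False
  then have "x > 0" using assms by simp
  then show ?thesis by (simp add: epow_def ennreal_mult'[symmetric] powr_add[symmetric])
qed

lemma epow_cmult:
  assumes "c > 0" "x \<ge> 0"
  shows "epow (ennreal (c * x)) e = ennreal (c powr e) * epow (ennreal x) e"
proof (cases "x = 0")
  case True then show ?thesis using assms by (auto simp: epow_def ennreal_top_mult)
next
  case False
  then have "x > 0" using assms by simp
  then show ?thesis using assms by (simp add: epow_def ennreal_mult'[symmetric] powr_mult)
qed

lemma real_ii:
  fixes g h b :: real assumes "g > 0" "h > 0" "b > 1"
  shows "b * h \<le> g powr (1-b) * h powr b + (b-1) * g"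
proof -
  let ?a = "g powr (1-b) * h powr b"
  have "?a powr (1/b) * g powr (1 - 1/b) \<le> (1/b) * ?a + (1-1/b) * g"
    by (rule Youngs_inequality_0) (use assms in auto)
  moreover have "?a powr (1/b) * g powr (1 - 1/b) = h"
  proof -
    have "?a powr (1/b) = g powr ((1-b)/b) * h"
      using assms by (simp add: powr_mult powr_powr)
    then have "?a powr (1/b) * g powr (1 - 1/b) = h * g powr ((1-b)/b + (1 - 1/b))"
      using assms by (simp add: powr_add)
    also have "(1-b)/b + (1 - 1/b) = 0" using assms by (simp add: field_simps)
    finally show ?thesis using assms by simp
  qed
  ultimately have "h \<le> (1/b) * ?a + (1-1/b) * g" by simp
  then have "b * h \<le> b * ((1/b) * ?a + (1-1/b) * g)" using assms by simp
  also have "\<dots> = ?a + (b-1)*g" using assms by (simp add: field_simps)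
  finally show ?thesis .
qed

lemma real_iii:
  fixes g h b :: real assumes "g > 0" "h > 0" "b < 0"
  shows "(1-b) * g \<le> g powr (1-b) * h powr b + (-b) * h"
proof -
  let ?a = "g powr (1-b) * h powr b"
  have "?a powr (1/(1-b)) * h powr (-b/(1-b)) \<le> (1/(1-b)) * ?a + (-b/(1-b)) * h"
    by (rule Youngs_inequality_0) (use assms in \<open>auto simp: field_simps\<close>)
  moreover have "?a powr (1/(1-b)) * h powr (-b/(1-b)) = g"
  proof -
    have "?a powr (1/(1-b)) = g * h powr (b/(1-b))"
      using assms by (simp add: powr_mult powr_powr)
    moreover have "h powr (b/(1-b)) * h powr (-b/(1-b)) = 1"
      using powr_add[of h "b/(1-b)" "-b/(1-b)"] assms by simp
    ultimately show ?thesis by (metis mult.assoc mult.right_neutral)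
  qed
  ultimately have "g \<le> (1/(1-b)) * ?a + (-b/(1-b)) * h" by simp
  then have "(1-b) * g \<le> (1-b) * ((1/(1-b)) * ?a + (-b/(1-b)) * h)" using assms by simp
  also have "\<dots> = ?a + (-b)*h" using assms by (simp add: right_diff_distrib)
  finally show ?thesis .
qed

lemma pw_i:
  fixes g h b :: real assumes "g \<ge> 0" "h \<ge> 0" "0 < b" "b < 1"
  shows "epow (ennreal g) (1-b) * epow (ennreal h) b \<le> ennreal ((1-b)*g + b*h)"
proof (cases "g = 0 \<or> h = 0")
  case True then show ?thesis using assms by (auto simp: epow_def)
next
  case False
  then have "g > 0" "h > 0" using assms by auto
  then have "g powr (1-b) * h powr b \<le> (1-b)*g + b*h"
    using assms Youngs_inequality_0[of "1-b" b g h] by simp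
  then show ?thesis using \<open>g>0\<close> \<open>h>0\<close>
    by (simp add: epow_def ennreal_mult'[symmetric] ennreal_leI del: ennreal_plus)
qed

lemma pw_ii:
  fixes g h b :: real assumes "g \<ge> 0" "h \<ge> 0" "1 < b"
  shows "ennreal (b*h) \<le> epow (ennreal g) (1-b) * epow (ennreal h) b + ennreal ((b-1)*g)"
proof (cases "g = 0 \<or> h = 0")
  case True then show ?thesis using assms by (auto simp: epow_def ennreal_top_mult)
next
  case False
  then have "g > 0" "h > 0" using assms by auto
  then have "ennreal (b*h) \<le> ennreal (g powr (1-b) * h powr b + (b-1) * g)"
    using assms real_ii[of g h b] by (intro ennreal_leI) simp
  also have "\<dots> = ennreal (g powr (1-b) * h powr b) + ennreal ((b-1) * g)"
    using assms \<open>g>0\<close> by (intro ennreal_plus) auto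
  finally show ?thesis using \<open>g>0\<close> \<open>h>0\<close> by (simp add: epow_def ennreal_mult'[symmetric])
qed

lemma pw_iii:
  fixes g h b :: real assumes "g \<ge> 0" "h \<ge> 0" "b < 0"
  shows "ennreal ((1-b)*g) \<le> epow (ennreal g) (1-b) * epow (ennreal h) b + ennreal ((-b)*h)"
proof (cases "g = 0 \<or> h = 0")
  case True then show ?thesis using assms by (auto simp: epow_def ennreal_mult_top)
next
  case False
  then have "g > 0" "h > 0" using assms by auto
  then have "ennreal ((1-b)*g) \<le> ennreal (g powr (1-b) * h powr b + (-b) * h)"
    using assms real_iii[of g h b] by (intro ennreal_leI) simp
  also have "\<dots> = ennreal (g powr (1-b) * h powr b) + ennreal ((-b) * h)"
    using assms \<open>h>0\<close> mult_neg_pos[of b h] by (intro ennreal_plus) auto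
  finally show ?thesis using \<open>g>0\<close> \<open>h>0\<close> by (simp add: epow_def ennreal_mult'[symmetric])
qed


lemma lhs_val:
 fixes a b c K :: real and Y0 Y1 :: ennreal
 assumes "a\<ge>0" "b\<ge>0" "a+b=1" "K\<ge>0"
   "ennreal a * Y0 + ennreal b * Y1 = ennreal K"
 shows "ereal a * (ereal c * (1 - enn2ereal Y0)) + ereal b * (ereal c * (1 - enn2ereal Y1)) = ereal (c * (1 - K))"
proof -
  consider "a = 0" | "b = 0" | "a > 0" "b > 0" using assms by linarith
  then show ?thesis
  proof cases
    case 1
    then have "b = 1" "Y1 = ennreal K" using assms by auto
    then show ?thesis using 1 assms by (simp add: zero_ereal_def[symmetric] one_ereal_def)
  next
    case 2
    then have "a = 1" "Y0 = ennreal K" using assms by auto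
    then show ?thesis using 2 assms by (simp add: zero_ereal_def[symmetric] one_ereal_def)
  next
    case 3
    have "Y0 \<noteq> top" using assms 3 by (auto simp: ennreal_mult_top)
    moreover have "Y1 \<noteq> top" using assms 3 by (auto simp: ennreal_mult_top)
    ultimately obtain y0 y1 where y: "Y0 = ennreal y0" "Y1 = ennreal y1" "y0 \<ge> 0" "y1 \<ge> 0"
      by (metis ennreal_cases)
    then have "a*y0 + b*y1 = K" using assms 3
      by (simp add: ennreal_mult'[symmetric] ennreal_plus[symmetric] del: ennreal_plus)
    moreover have "a*(c*(1-y0)) + b*(c*(1-y1)) = c*(1-(a*y0+b*y1))"
      using assms(3) by (simp add: algebra_simps) (metis add.commute add_diff_cancel_left' distrib_right mult.commute mult_1)
    ultimately show ?thesis using y by (simp add: one_ereal_def)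
  qed
qed

lemma term_inf:
  fixes a c :: real assumes "a > 0" "c < 0"
  shows "ereal a * (ereal c * (1 - enn2ereal top)) = \<infinity>"
  using assms by (simp add: one_ereal_def)

lemma term_nm:
  fixes a c :: real and X :: ennreal assumes "a \<ge> 0" "c < 0"
  shows "ereal a * (ereal c * (1 - enn2ereal X)) \<noteq> -\<infinity>"
proof (cases X)
  case (real r) then show ?thesis by (simp add: one_ereal_def)
next
  case top then show ?thesis using assms by (cases "a = 0") (simp_all add: zero_ereal_def[symmetric] one_ereal_def)
qed

lemma rhs_ge:
 fixes a b c K :: real and X0 X1 :: ennreal
 assumes "a\<ge>0" "b\<ge>0" "a+b=1" "K\<ge>0"
   "c > 0 \<Longrightarrow> ennreal a * X0 + ennreal b * X1 \<le> ennreal K"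
   "c < 0 \<Longrightarrow> ennreal K \<le> ennreal a * X0 + ennreal b * X1"
 shows "ereal (c * (1 - K)) \<le> ereal a * (ereal c * (1 - enn2ereal X0)) + ereal b * (ereal c * (1 - enn2ereal X1))"
proof (cases "ennreal a * X0 + ennreal b * X1 = top")
  case False
  then obtain K' where K': "K' \<ge> 0" "ennreal a * X0 + ennreal b * X1 = ennreal K'"
    by (metis ennreal_cases)
  have "ereal a * (ereal c * (1 - enn2ereal X0)) + ereal b * (ereal c * (1 - enn2ereal X1)) = ereal (c * (1 - K'))"
    by (rule lhs_val) (use assms K' in auto)
  moreover have "c * (1 - K) \<le> c * (1 - K')"
  proof -
    consider "c > 0" | "c < 0" | "c = 0" by linarith
    then show ?thesis
    proof cases
      case 1 then have "K' \<le> K" using assms K' by simp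
      then show ?thesis using 1 by (simp add: mult_left_mono)
    next
      case 2 then have "K \<le> K'" using assms K' by simp
      then show ?thesis using 2 by (simp add: mult_left_mono_neg)
    qed simp
  qed
  ultimately show ?thesis by simp
next
  case True
  consider "c > 0" | "c < 0" | "c = 0" by linarith
  then show ?thesis
  proof cases
    case 1 then have "top \<le> ennreal K" using assms True by simp
    then show ?thesis by (simp add: top_unique)
  next
    case 3 then show ?thesis by (simp add: zero_ereal_def[symmetric])
  next
    case 2
    have "(a > 0 \<and> X0 = top) \<or> (b > 0 \<and> X1 = top)"
      using True assms(1,2) by (auto simp: ennreal_mult_eq_top_iff)
    then show ?thesis
    proof
      assume h: "a > 0 \<and> X0 = top"
      then show ?thesis using term_inf[of a c] term_nm[of b c X1] 2 assms by simp
    next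
      assume h: "b > 0 \<and> X1 = top"
      then show ?thesis using term_inf[of b c] term_nm[of a c X0] 2 assms by simp
    qed
  qed
qed


lemma gpp_fin:
  assumes "0 \<le> \<xi>" "\<xi> \<le> 1" "\<alpha> \<noteq> -1"
  shows "gpp_num \<xi> \<alpha> p0 p1 \<theta> < top"
proof -
  let ?b = "(1+\<alpha>)/2"
  let ?S = "ennreal (1 - \<xi>) * epow (ennreal (p0 \<theta>)) ?b + ennreal \<xi> * epow (ennreal (p1 \<theta>)) ?b"
  have fin_pos: "epow (ennreal x) e < top" if "e > 0" for x e
    using that by (auto simp: epow_def)
  have pos_neg: "epow (ennreal x) e > 0" if "e < 0" for x e
    using that by (cases "x > 0") (auto simp: epow_def ennreal_eq_0_iff)
  consider "?b > 0" | "?b < 0" using assms by (cases "\<alpha> > -1") (auto simp: field_simps)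
  then show ?thesis
  proof cases
    case 1
    then have "?S < top" using fin_pos[of ?b] by (simp add: ennreal_mult_less_top)
    moreover have "2/(1+\<alpha>) > 0" using 1 by (simp add: field_simps)
    ultimately show ?thesis unfolding gpp_num_def
      by (cases ?S) (auto simp: epow_def)
  next
    case 2
    have "?S > 0"
    proof (cases "\<xi> = 0")
      case True then show ?thesis using pos_neg[OF 2] by simp
    next
      case False
      then have "0 < ennreal \<xi> * epow (ennreal (p1 \<theta>)) ?b"
        using pos_neg[OF 2] assms by (simp add: ennreal_zero_less_mult_iff)
      then show ?thesis by (meson add_increasing less_le_trans order_refl zero_le)
    qed
    moreover have "2/(1+\<alpha>) < 0" using 2 by (simp add: field_simps)
    ultimately show ?thesis unfolding gpp_num_def
      by (cases ?S) (auto simp: epow_def)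
  qed
qed

theorem mainTheorem1:
  fixes M :: "'a measure" and L L0 \<pi>0 :: "'a \<Rightarrow> real" and \<xi> \<alpha> :: real
  assumes L_meas: "L \<in> borel_measurable M" and L0_meas: "L0 \<in> borel_measurable M"
    and L_pos: "\<forall>\<theta>\<in>space M. 0 < L \<theta>" and L0_pos: "\<forall>\<theta>\<in>space M. 0 < L0 \<theta>"
    and prior: "is_density M \<pi>0"
    and xi: "0 \<le> \<xi>" "\<xi> \<le> 1"
    and alpha: "\<alpha> \<noteq> 1" "\<alpha> \<noteq> -1"
    and Z_pos: "0 < (\<integral>\<^sup>+ \<theta>. gpp_num \<xi> \<alpha> (\<lambda>\<theta>. L \<theta> * \<pi>0 \<theta>) (\<lambda>\<theta>. L \<theta> * L0 \<theta> * \<pi>0 \<theta>) \<theta> \<partial>M)"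
    and Z_fin: "(\<integral>\<^sup>+ \<theta>. gpp_num \<xi> \<alpha> (\<lambda>\<theta>. L \<theta> * \<pi>0 \<theta>) (\<lambda>\<theta>. L \<theta> * L0 \<theta> * \<pi>0 \<theta>) \<theta> \<partial>M) < \<infinity>"
  shows "let p0 = (\<lambda>\<theta>. L \<theta> * \<pi>0 \<theta>);
             p1 = (\<lambda>\<theta>. L \<theta> * L0 \<theta> * \<pi>0 \<theta>);
             gstar = gen_power_posterior M \<xi> \<alpha> p0 p1;
             obj = (\<lambda>g. ereal (1 - \<xi>) * alpha_div M \<alpha> g p0 + ereal \<xi> * alpha_div M \<alpha> g p1)
         in is_density M gstar \<and> (\<forall>g. is_density M g \<longrightarrow> obj gstar \<le> obj g)"
proof -
  define p0 where "p0 = (\<lambda>\<theta>. L \<theta> * \<pi>0 \<theta>)"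
  define p1 where "p1 = (\<lambda>\<theta>. L \<theta> * L0 \<theta> * \<pi>0 \<theta>)"
  define b where "b = (1 + \<alpha>) / 2"
  define c where "c = 4 / (1 - \<alpha>\<^sup>2)"
  have b0: "b \<noteq> 0" and b1: "b \<noteq> 1" using alpha by (auto simp: b_def)
  have eb1: "(1 - \<alpha>) / 2 = 1 - b" by (simp add: b_def field_simps)
  have eb2: "2 / (1 + \<alpha>) = 1 / b" by (simp add: b_def)
  have pi_meas: "\<pi>0 \<in> borel_measurable M" using prior by (simp add: is_density_def)
  have p0m: "p0 \<in> borel_measurable M" unfolding p0_def using L_meas pi_meas by measurable
  have p1m: "p1 \<in> borel_measurable M" unfolding p1_def using L_meas L0_meas pi_meas by measurable
  define S where "S = (\<lambda>\<theta>. ennreal (1 - \<xi>) * epow (ennreal (p0 \<theta>)) b + ennreal \<xi> * epow (ennreal (p1 \<theta>)) b)"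
  define gp where "gp = gpp_num \<xi> \<alpha> p0 p1"
  have gp_eq: "gp \<theta> = epow (S \<theta>) (1/b)" for \<theta>
    unfolding gp_def gpp_num_def S_def eb2 b_def[symmetric] by (rule refl)
  have S_eq: "S \<theta> = epow (gp \<theta>) b" for \<theta>
    using epow_inv[of "1/b" "S \<theta>"] b0 by (simp add: gp_eq)
  have Sm: "S \<in> borel_measurable M" unfolding S_def using p0m p1m by measurable
  have gpm: "gp \<in> borel_measurable M" unfolding gp_eq[abs_def] using Sm by measurable
  have gp_fin: "gp \<theta> < top" for \<theta> unfolding gp_def by (rule gpp_fin[OF xi alpha(2)])
  define Zn where "Zn = (\<integral>\<^sup>+ \<theta>. gp \<theta> \<partial>M)"
  define Z where "Z = enn2real Zn"
  have Zn_alt: "Zn = (\<integral>\<^sup>+ \<theta>. gpp_num \<xi> \<alpha> (\<lambda>\<theta>. L \<theta> * \<pi>0 \<theta>) (\<lambda>\<theta>. L \<theta> * L0 \<theta> * \<pi>0 \<theta>) \<theta> \<partial>M)"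
    unfolding Zn_def gp_def p0_def p1_def by (rule refl)
  have Zn_eq: "Zn = ennreal Z" and Zpos: "Z > 0"
    using Z_pos Z_fin unfolding Z_def Zn_alt[symmetric]
    by (auto simp: enn2real_positive_iff less_top)
  define gs where "gs = gen_power_posterior M \<xi> \<alpha> p0 p1"
  have gs_eq: "gs \<theta> = enn2real (gp \<theta>) / Z" for \<theta>
    by (simp add: gs_def gen_power_posterior_def gp_def Z_def Zn_def)
  have gs_nn: "0 \<le> gs \<theta>" for \<theta> using Zpos by (simp add: gs_eq)
  have gp_gs: "gp \<theta> = ennreal (Z * gs \<theta>)" for \<theta>
    using Zpos gp_fin[of \<theta>] by (simp add: gs_eq ennreal_enn2real_if less_top)
  have gsm: "gs \<in> borel_measurable M" unfolding gs_eq[abs_def] using gpm by measurable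
  have gs_int: "(\<integral>\<^sup>+ \<theta>. ennreal (gs \<theta>) \<partial>M) = 1"
  proof -
    have "(\<integral>\<^sup>+ \<theta>. ennreal (gs \<theta>) \<partial>M) = (\<integral>\<^sup>+ \<theta>. gp \<theta> * ennreal (1/Z) \<partial>M)"
      using Zpos gs_nn
      by (intro nn_integral_cong) (simp add: gp_gs ennreal_mult[symmetric] del: ennreal_mult')
    also have "\<dots> = Zn * ennreal (1/Z)" using gpm by (simp add: nn_integral_multc Zn_def)
    also have "\<dots> = 1" using Zpos by (simp add: Zn_eq ennreal_mult'[symmetric])
    finally show ?thesis .
  qed
  have dens: "is_density M gs" using gsm gs_nn gs_int by (simp add: is_density_def)
  have key: "ennreal (1-\<xi>) * (\<integral>\<^sup>+\<theta>. epow (ennreal (g \<theta>)) (1-b) * epow (ennreal (p0 \<theta>)) b \<partial>M)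
      + ennreal \<xi> * (\<integral>\<^sup>+\<theta>. epow (ennreal (g \<theta>)) (1-b) * epow (ennreal (p1 \<theta>)) b \<partial>M)
      = ennreal (Z powr b) * (\<integral>\<^sup>+\<theta>. epow (ennreal (g \<theta>)) (1-b) * epow (ennreal (gs \<theta>)) b \<partial>M)"
    if gm: "g \<in> borel_measurable M" for g
  proof -
    let ?G = "\<lambda>\<theta>. epow (ennreal (g \<theta>)) (1-b)"
    have m0: "(\<lambda>\<theta>. ?G \<theta> * epow (ennreal (p0 \<theta>)) b) \<in> borel_measurable M" using gm p0m by measurable
    have m1: "(\<lambda>\<theta>. ?G \<theta> * epow (ennreal (p1 \<theta>)) b) \<in> borel_measurable M" using gm p1m by measurable
    have m2: "(\<lambda>\<theta>. ?G \<theta> * epow (ennreal (gs \<theta>)) b) \<in> borel_measurable M" using gm gsm by measurable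
    have "ennreal (1-\<xi>) * (\<integral>\<^sup>+\<theta>. ?G \<theta> * epow (ennreal (p0 \<theta>)) b \<partial>M)
      + ennreal \<xi> * (\<integral>\<^sup>+\<theta>. ?G \<theta> * epow (ennreal (p1 \<theta>)) b \<partial>M)
      = (\<integral>\<^sup>+\<theta>. ennreal (1-\<xi>) * (?G \<theta> * epow (ennreal (p0 \<theta>)) b)
           + ennreal \<xi> * (?G \<theta> * epow (ennreal (p1 \<theta>)) b) \<partial>M)"
      using m0 m1 by (simp add: nn_integral_add nn_integral_cmult)
    also have "\<dots> = (\<integral>\<^sup>+\<theta>. ennreal (Z powr b) * (?G \<theta> * epow (ennreal (gs \<theta>)) b) \<partial>M)"
    proof (intro nn_integral_cong)
      fix \<theta>
      have "ennreal (1-\<xi>) * (?G \<theta> * epow (ennreal (p0 \<theta>)) b)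
           + ennreal \<xi> * (?G \<theta> * epow (ennreal (p1 \<theta>)) b) = ?G \<theta> * S \<theta>"
        by (simp add: S_def algebra_simps)
      also have "\<dots> = ?G \<theta> * epow (ennreal (Z * gs \<theta>)) b" by (simp add: S_eq gp_gs)
      also have "\<dots> = ennreal (Z powr b) * (?G \<theta> * epow (ennreal (gs \<theta>)) b)"
        using Zpos gs_nn[of \<theta>] by (simp add: epow_cmult algebra_simps)
      finally show "ennreal (1-\<xi>) * (?G \<theta> * epow (ennreal (p0 \<theta>)) b)
           + ennreal \<xi> * (?G \<theta> * epow (ennreal (p1 \<theta>)) b) = ennreal (Z powr b) * (?G \<theta> * epow (ennreal (gs \<theta>)) b)" .
    qed
    also have "\<dots> = ennreal (Z powr b) * (\<integral>\<^sup>+\<theta>. ?G \<theta> * epow (ennreal (gs \<theta>)) b \<partial>M)"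
      using m2 by (simp add: nn_integral_cmult)
    finally show ?thesis .
  qed
  have J_star: "(\<integral>\<^sup>+\<theta>. epow (ennreal (gs \<theta>)) (1-b) * epow (ennreal (gs \<theta>)) b \<partial>M) = 1"
    using gs_int by (simp add: epow_self gs_nn)
  have c_eq: "c = 1 / (b * (1 - b))" by (simp add: c_def b_def field_simps power2_eq_square)
  have J_ineq: "(c > 0 \<longrightarrow> (\<integral>\<^sup>+\<theta>. epow (ennreal (g \<theta>)) (1-b) * epow (ennreal (gs \<theta>)) b \<partial>M) \<le> 1)
      \<and> (c < 0 \<longrightarrow> 1 \<le> (\<integral>\<^sup>+\<theta>. epow (ennreal (g \<theta>)) (1-b) * epow (ennreal (gs \<theta>)) b \<partial>M))"
    if gd: "is_density M g" for g
  proof -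
    have gm: "g \<in> borel_measurable M" and gnn: "\<forall>\<theta>\<in>space M. 0 \<le> g \<theta>"
      and gi: "(\<integral>\<^sup>+\<theta>. ennreal (g \<theta>) \<partial>M) = 1" using gd by (auto simp: is_density_def)
    let ?J = "(\<integral>\<^sup>+\<theta>. epow (ennreal (g \<theta>)) (1-b) * epow (ennreal (gs \<theta>)) b \<partial>M)"
    have m2: "(\<lambda>\<theta>. epow (ennreal (g \<theta>)) (1-b) * epow (ennreal (gs \<theta>)) b) \<in> borel_measurable M"
      using gm gsm by measurable
    have lin: "(\<integral>\<^sup>+\<theta>. ennreal (u * g \<theta>) + ennreal (v * gs \<theta>) \<partial>M) = ennreal (u + v)"
      if "u \<ge> 0" "v \<ge> 0" for u v
    proof -
      have "(\<integral>\<^sup>+\<theta>. ennreal (u * g \<theta>) + ennreal (v * gs \<theta>) \<partial>M)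
          = (\<integral>\<^sup>+\<theta>. ennreal u * ennreal (g \<theta>) + ennreal v * ennreal (gs \<theta>) \<partial>M)"
        using that gnn gs_nn by (intro nn_integral_cong) (simp add: ennreal_mult)
      also have "\<dots> = ennreal u * 1 + ennreal v * 1"
        using gm gsm by (simp add: nn_integral_add nn_integral_cmult gi gs_int)
      finally show ?thesis using that by (simp add: ennreal_plus)
    qed
    consider "0 < b" "b < 1" | "1 < b" | "b < 0" using b0 b1 by linarith
    then show ?thesis
    proof cases
      case 1
      then have cpos: "c > 0" by (simp add: c_eq)
      have "?J \<le> (\<integral>\<^sup>+\<theta>. ennreal ((1-b) * g \<theta>) + ennreal (b * gs \<theta>) \<partial>M)"
      proof (intro nn_integral_mono)
        fix \<theta> assume "\<theta> \<in> space M"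
        then have "epow (ennreal (g \<theta>)) (1-b) * epow (ennreal (gs \<theta>)) b \<le> ennreal ((1-b) * g \<theta> + b * gs \<theta>)"
          using gnn gs_nn 1 by (intro pw_i) auto
        also have "\<dots> = ennreal ((1-b) * g \<theta>) + ennreal (b * gs \<theta>)"
          using gnn gs_nn 1 \<open>\<theta> \<in> space M\<close> by (intro ennreal_plus) auto
        finally show "epow (ennreal (g \<theta>)) (1-b) * epow (ennreal (gs \<theta>)) b \<le> ennreal ((1-b) * g \<theta>) + ennreal (b * gs \<theta>)" .
      qed
      also have "\<dots> = 1" using lin[of "1-b" b] 1 by simp
      finally show ?thesis using cpos by simp
    next
      case 2
      then have cneg: "c < 0" by (simp add: c_eq divide_neg_pos mult_pos_neg)
      have "ennreal b = (\<integral>\<^sup>+\<theta>. ennreal (b * gs \<theta>) \<partial>M)"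
        using lin[of 0 b] 2 by simp
      also have "\<dots> \<le> (\<integral>\<^sup>+\<theta>. epow (ennreal (g \<theta>)) (1-b) * epow (ennreal (gs \<theta>)) b + ennreal ((b-1) * g \<theta>) \<partial>M)"
        using gnn gs_nn 2 by (intro nn_integral_mono pw_ii) auto
      also have "\<dots> = ?J + ennreal (b-1)"
        using lin[of "b-1" 0] 2 m2 gm by (simp add: nn_integral_add)
      finally have h: "ennreal b \<le> ?J + ennreal (b-1)" .
      have "ennreal b = ennreal (b-1) + 1"
        using 2 ennreal_plus[of "b-1" 1] by simp
      then have "ennreal (b-1) + 1 \<le> ennreal (b-1) + ?J" using h by (metis add.commute)
      then have "1 \<le> ?J" by (simp add: ennreal_add_left_cancel_le)
      then show ?thesis using cneg by simp
    next
      case 3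
      then have cneg: "c < 0" by (simp add: c_eq divide_neg_pos mult_neg_pos)
      have "ennreal (1-b) = (\<integral>\<^sup>+\<theta>. ennreal ((1-b) * g \<theta>) \<partial>M)"
        using lin[of "1-b" 0] 3 by simp
      also have "\<dots> \<le> (\<integral>\<^sup>+\<theta>. epow (ennreal (g \<theta>)) (1-b) * epow (ennreal (gs \<theta>)) b + ennreal ((-b) * gs \<theta>) \<partial>M)"
        using gnn gs_nn 3 by (intro nn_integral_mono pw_iii) auto
      also have "\<dots> = ?J + ennreal (-b)"
        using lin[of 0 "-b"] 3 m2 gsm by (simp add: nn_integral_add)
      finally have h: "ennreal (1-b) \<le> ?J + ennreal (-b)" .
      have "ennreal (1-b) = ennreal (-b) + 1"
        using 3 ennreal_plus[of "-b" 1] by simp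
      then have "ennreal (-b) + 1 \<le> ennreal (-b) + ?J" using h by (metis add.commute)
      then have "1 \<le> ?J" by (simp add: ennreal_add_left_cancel_le)
      then show ?thesis using cneg by simp
    qed
  qed
  define I where "I = (\<lambda>g q. (\<integral>\<^sup>+\<theta>. epow (ennreal (g \<theta>)) (1-b) * epow (ennreal (q \<theta>)) b \<partial>M))"
  define OBJ where "OBJ = (\<lambda>g. ereal (1-\<xi>) * (ereal c * (1 - enn2ereal (I g p0)))
      + ereal \<xi> * (ereal c * (1 - enn2ereal (I g p1))))"
  have Kn: "Z powr b \<ge> 0" by simp
  have obj_star: "OBJ gs = ereal (c * (1 - Z powr b))"
    unfolding OBJ_def
  proof (rule lhs_val)
    show "ennreal (1 - \<xi>) * I gs p0 + ennreal \<xi> * I gs p1 = ennreal (Z powr b)"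
      using key[OF gsm] J_star by (simp add: I_def)
  qed (use xi in auto)
  have obj_ge: "OBJ gs \<le> OBJ g" if gd: "is_density M g" for g
  proof -
    have gm: "g \<in> borel_measurable M" using gd by (simp add: is_density_def)
    have W: "ennreal (1 - \<xi>) * I g p0 + ennreal \<xi> * I g p1 = ennreal (Z powr b) * I g gs"
      using key[OF gm] by (simp add: I_def)
    have "ereal (c * (1 - Z powr b)) \<le> OBJ g"
      unfolding OBJ_def
    proof (rule rhs_ge)
      show "ennreal (1 - \<xi>) * I g p0 + ennreal \<xi> * I g p1 \<le> ennreal (Z powr b)" if "c > 0"
      proof -
        have "I g gs \<le> 1" using J_ineq[OF gd] that by (simp add: I_def)
        then have "ennreal (Z powr b) * I g gs \<le> ennreal (Z powr b) * 1" by (rule mult_left_mono) simp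
        then show ?thesis using W by simp
      qed
      show "ennreal (Z powr b) \<le> ennreal (1 - \<xi>) * I g p0 + ennreal \<xi> * I g p1" if "c < 0"
      proof -
        have "1 \<le> I g gs" using J_ineq[OF gd] that by (simp add: I_def)
        then have "ennreal (Z powr b) * 1 \<le> ennreal (Z powr b) * I g gs" by (rule mult_left_mono) simp
        then show ?thesis using W by simp
      qed
    qed (use xi in auto)
    then show ?thesis using obj_star by simp
  qed
  have goal: "is_density M gs \<and> (\<forall>g. is_density M g \<longrightarrow> OBJ gs \<le> OBJ g)"
    using dens obj_ge by blast
  show ?thesis
    unfolding Let_def p0_def[symmetric] p1_def[symmetric] gs_def[symmetric] alpha_div_def eb1
      b_def[symmetric] c_def[symmetric]
    using goal by (simp add: OBJ_def I_def)
qed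
end
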